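(* Let $D$ be a semi-complete digraph containing $\overleftrightarrow{S_4}$ as a subdigraph. Then $D$ is $3$-dicritical if and only if $D$ is isomorphic to $\vec{W_3}$.
   Context: A digraph is semi-complete if every two distinct vertices are joined by at least one arc. A $2$-dicolouring is a map to $\{1,2\}$ whose colour classes induce acyclic subdigraphs. $D$ is $3$-dicritical if $D$ has no $2$-dicolouring but every proper subdigraph has one. $\overleftrightarrow{S_4}$ is the bidirected star on 4 vertices: a vertex $r$ joined by a digon (both arcs) to each of three other vertices, with no other arcs. $\vec{W_3}$ consists of a directed triangle $a\to b\to c\to a$ and a vertex $r$ joined by a digon to each of $a,b,c$. Subdigraph containment is up to isomorphism. *)

theory Defs
  imports Main
begin

text \<open>A digraph is a pair (V, A): a finite vertex set and a loopless arc relation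
  on V (no parallel arcs; digons allowed).\<close>

definition digraph :: "'a set \<Rightarrow> ('a \<times> 'a) set \<Rightarrow> bool" where
  "digraph V A \<longleftrightarrow> finite V \<and> A \<subseteq> V \<times> V \<and> (\<forall>v. (v, v) \<notin> A)"

definition semicomplete :: "'a set \<Rightarrow> ('a \<times> 'a) set \<Rightarrow> bool" where
  "semicomplete V A \<longleftrightarrow>
     (\<forall>u\<in>V. \<forall>v\<in>V. u \<noteq> v \<longrightarrow> (u, v) \<in> A \<or> (v, u) \<in> A)"

definition induced_arcs :: "('a \<times> 'a) set \<Rightarrow> 'a set \<Rightarrow> ('a \<times> 'a) set" where
  "induced_arcs A X = A \<inter> (X \<times> X)"

definition two_dicolouring :: "'a set \<Rightarrow> ('a \<times> 'a) set \<Rightarrow> ('a \<Rightarrow> nat) \<Rightarrow> bool" where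
  "two_dicolouring V A c \<longleftrightarrow>
     (\<forall>v\<in>V. c v \<in> {1, 2}) \<and>
     (\<forall>i\<in>{1::nat, 2}. acyclic (induced_arcs A {v \<in> V. c v = i}))"

definition two_dicolourable :: "'a set \<Rightarrow> ('a \<times> 'a) set \<Rightarrow> bool" where
  "two_dicolourable V A \<longleftrightarrow> (\<exists>c. two_dicolouring V A c)"

definition subdigraph :: "'a set \<Rightarrow> ('a \<times> 'a) set \<Rightarrow> 'a set \<Rightarrow> ('a \<times> 'a) set \<Rightarrow> bool" where
  "subdigraph V' A' V A \<longleftrightarrow> V' \<subseteq> V \<and> A' \<subseteq> A \<and> A' \<subseteq> V' \<times> V'"

definition three_dicritical :: "'a set \<Rightarrow> ('a \<times> 'a) set \<Rightarrow> bool" where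
  "three_dicritical V A \<longleftrightarrow>
     \<not> two_dicolourable V A \<and>
     (\<forall>V' A'. subdigraph V' A' V A \<and> (V', A') \<noteq> (V, A) \<longrightarrow> two_dicolourable V' A')"

definition contains_subdigraph ::
    "'a set \<Rightarrow> ('a \<times> 'a) set \<Rightarrow> 'b set \<Rightarrow> ('b \<times> 'b) set \<Rightarrow> bool" where
  "contains_subdigraph V A W B \<longleftrightarrow>
     (\<exists>f. inj_on f W \<and> f ` W \<subseteq> V \<and> (\<forall>(x, y)\<in>B. (f x, f y) \<in> A))"

definition isomorphic ::
    "'a set \<Rightarrow> ('a \<times> 'a) set \<Rightarrow> 'b set \<Rightarrow> ('b \<times> 'b) set \<Rightarrow> bool" where
  "isomorphic V A W B \<longleftrightarrow>
     (\<exists>f. bij_betw f V W \<and> (\<forall>x\<in>V. \<forall>y\<in>V. (x, y) \<in> A \<longleftrightarrow> (f x, f y) \<in> B))"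

definition S4_V :: "nat set" where "S4_V = {0, 1, 2, 3}"
definition S4_A :: "(nat \<times> nat) set" where
  "S4_A = {(0,1),(1,0),(0,2),(2,0),(0,3),(3,0)}"

definition W3_V :: "nat set" where "W3_V = {0, 1, 2, 3}"
definition W3_A :: "(nat \<times> nat) set" where
  "W3_A = {(1,2),(2,3),(3,1),(0,1),(1,0),(0,2),(2,0),(0,3),(3,0)}"

end

theory Submission
  imports Defs
begin

lemma acyc_rank:
  fixes h :: "'a \<Rightarrow> nat"
  assumes "\<forall>(u,v)\<in>R. h u < h v"
  shows "acyclic R"
proof -
  have "h u < h v" if "(u,v) \<in> R\<^sup>+" for u v
    using that by (induction rule: trancl_induct) (use assms in auto)
  then show ?thesis unfolding acyclic_def by fastforce
qed

lemma digon_not_acyc: "(a,b) \<in> R \<Longrightarrow> (b,a) \<in> R \<Longrightarrow> \<not> acyclic R"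
  unfolding acyclic_def by (meson r_into_trancl' trancl_into_trancl)

lemma cyc_not_acyc: "(a,b) \<in> R \<Longrightarrow> (b,c) \<in> R \<Longrightarrow> (c,a) \<in> R \<Longrightarrow> \<not> acyclic R"
  unfolding acyclic_def by (meson r_into_trancl' trancl_into_trancl)

lemma acyc_sub: "acyclic R \<Longrightarrow> S \<subseteq> R\<^sup>+ \<Longrightarrow> acyclic S"
  unfolding acyclic_def by (metis subsetD trancl_id trancl_mono trans_trancl)

lemma digon_diff_col:
  assumes cv: "\<forall>v\<in>V. col v \<in> {1,2}"
    and ac: "\<forall>i\<in>{1::nat,2}. acyclic (induced_arcs A {v\<in>V. col v = i})"
    and "r \<in> V" "x \<in> V" "(r,x) \<in> A" "(x,r) \<in> A"
  shows "col x \<noteq> col r"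
proof
  assume eq: "col x = col r"
  let ?R = "induced_arcs A {v\<in>V. col v = col r}"
  have 1: "(r,x) \<in> ?R" "(x,r) \<in> ?R" using assms(3-6) eq by (simp_all add: induced_arcs_def)
  have 2: "col r \<in> {1,2}" using cv \<open>r\<in>V\<close> by (rule bspec)
  have 3: "acyclic ?R" using ac 2 by (rule bspec)
  show False using digon_not_acyc[OF 1] 3 by blast
qed

lemma W3_noncol:
  assumes "r\<in>V" "a\<in>V" "b\<in>V" "c\<in>V"
    and "(r,a)\<in>A" "(a,r)\<in>A" "(r,b)\<in>A" "(b,r)\<in>A" "(r,c)\<in>A" "(c,r)\<in>A"
    and "(a,b)\<in>A" "(b,c)\<in>A" "(c,a)\<in>A"
  shows "\<not> two_dicolourable V A"
proof
  assume "two_dicolourable V A"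
  then obtain col where "two_dicolouring V A col" unfolding two_dicolourable_def by blast
  hence cv: "\<forall>v\<in>V. col v \<in> {1,2}"
    and ac: "\<forall>i\<in>{1::nat,2}. acyclic (induced_arcs A {v\<in>V. col v = i})"
    unfolding two_dicolouring_def by blast+
  have "col a \<noteq> col r" "col b \<noteq> col r" "col c \<noteq> col r"
    using digon_diff_col[OF cv ac] assms(1-10) by simp_all
  moreover have "col a \<in> {1,2}" "col b \<in> {1,2}" "col c \<in> {1,2}" "col r \<in> {1,2}"
    using cv assms(1-4) by blast+
  ultimately have e: "col b = col a" "col c = col a" by fastforce+
  let ?R = "induced_arcs A {v\<in>V. col v = col a}"
  have 1: "(a,b) \<in> ?R" "(b,c) \<in> ?R" "(c,a) \<in> ?R" using assms(1-4,11-13) e by (simp_all add: induced_arcs_def)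
  have 2: "col a \<in> {1,2}" using cv \<open>a\<in>V\<close> by (rule bspec)
  have 3: "acyclic ?R" using ac 2 by (rule bspec)
  show False using cyc_not_acyc[OF 1] 3 by blast
qed

lemma trans_not_crit:
  assumes AV: "A \<subseteq> V \<times> V"
    and V: "r\<in>V" "x\<in>V" "y\<in>V" "z\<in>V"
    and d: "r\<noteq>x" "r\<noteq>y" "r\<noteq>z" "x\<noteq>y" "y\<noteq>z" "x\<noteq>z"
    and g: "(r,x)\<in>A" "(x,r)\<in>A" "(r,y)\<in>A" "(y,r)\<in>A" "(r,z)\<in>A" "(z,r)\<in>A"
    and t: "(x,y)\<in>A" "(y,z)\<in>A" "(x,z)\<in>A"
  shows "\<not> three_dicritical V A"
proof
  assume crit: "three_dicritical V A"
  let ?A = "A - {(x,z)}"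
  have s: "subdigraph V ?A V A" using AV unfolding subdigraph_def by blast
  have n: "(V, ?A) \<noteq> (V, A)" using t(3) by blast
  have all: "\<forall>V' A'. subdigraph V' A' V A \<and> (V', A') \<noteq> (V, A) \<longrightarrow> two_dicolourable V' A'"
    using crit unfolding three_dicritical_def by blast
  have "two_dicolourable V ?A" using all[rule_format, OF conjI[OF s n]] .
  then obtain col where "two_dicolouring V ?A col" unfolding two_dicolourable_def by blast
  hence cv: "\<forall>v\<in>V. col v \<in> {1,2}"
    and ac: "\<forall>i\<in>{1::nat,2}. acyclic (induced_arcs ?A {v\<in>V. col v = i})"
    unfolding two_dicolouring_def by blast+
  have g': "(r,x)\<in>?A" "(x,r)\<in>?A" "(r,y)\<in>?A" "(y,r)\<in>?A" "(r,z)\<in>?A" "(z,r)\<in>?A"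
    using g d by simp_all
  have "col x \<noteq> col r" "col y \<noteq> col r" "col z \<noteq> col r"
    using digon_diff_col[OF cv ac] V g' by simp_all
  moreover have "col x \<in> {1,2}" "col y \<in> {1,2}" "col z \<in> {1,2}" "col r \<in> {1,2}"
    using cv V by blast+
  ultimately have e: "col y = col x" "col z = col x" by fastforce+
  have "two_dicolouring V A col"
    unfolding two_dicolouring_def
  proof (intro conjI ballI)
    fix v assume "v \<in> V" then show "col v \<in> {1,2}" using cv by blast
  next
    fix i :: nat assume i: "i \<in> {1,2}"
    let ?C = "{v\<in>V. col v = i}"
    have sub: "induced_arcs A ?C \<subseteq> (induced_arcs ?A ?C)\<^sup>+"
    proof
      fix p assume p: "p \<in> induced_arcs A ?C"
      show "p \<in> (induced_arcs ?A ?C)\<^sup>+"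
      proof (cases "p = (x,z)")
        case True
        then have "x \<in> ?C" using p by (simp add: induced_arcs_def)
        then have 1: "(x,y) \<in> induced_arcs ?A ?C" "(y,z) \<in> induced_arcs ?A ?C"
          using e V d t by (simp_all add: induced_arcs_def)
        show ?thesis unfolding True by (rule trancl_into_trancl[OF r_into_trancl[OF 1(1)] 1(2)])
      next
        case False
        then show ?thesis using p by (auto simp: induced_arcs_def)
      qed
    qed
    have "acyclic (induced_arcs ?A ?C)" using ac i by (rule bspec)
    then show "acyclic (induced_arcs A ?C)" using sub by (rule acyc_sub)
  qed
  then show False using crit unfolding three_dicritical_def two_dicolourable_def by blast
qed

lemma crit_cyc:
  assumes crit: "three_dicritical V A"
    and V: "r\<in>V" "a\<in>V" "b\<in>V" "c\<in>V"
    and d: "r\<noteq>a" "r\<noteq>b" "r\<noteq>c" "a\<noteq>b" "b\<noteq>c" "a\<noteq>c"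
    and g: "(r,a)\<in>A" "(a,r)\<in>A" "(r,b)\<in>A" "(b,r)\<in>A" "(r,c)\<in>A" "(c,r)\<in>A"
    and t: "(a,b)\<in>A" "(b,c)\<in>A" "(c,a)\<in>A"
  shows "isomorphic V A W3_V W3_A"
proof -
  let ?V = "{r,a,b,c}"
  let ?A = "{(a,b),(b,c),(c,a),(r,a),(a,r),(r,b),(b,r),(r,c),(c,r)}"
  have s: "subdigraph ?V ?A V A" unfolding subdigraph_def using V g t by simp
  have nc: "\<not> two_dicolourable ?V ?A"
    by (rule W3_noncol[of r _ a b c]) simp_all
  have all: "\<forall>V' A'. subdigraph V' A' V A \<and> (V', A') \<noteq> (V, A) \<longrightarrow> two_dicolourable V' A'"
    using crit unfolding three_dicritical_def by blast
  have eq0: "(?V, ?A) = (V, A)"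
  proof (rule ccontr)
    assume ne: "(?V, ?A) \<noteq> (V, A)"
    have "two_dicolourable ?V ?A" using all[rule_format, OF conjI[OF s ne]] .
    then show False using nc by contradiction
  qed
  then have eq: "?V = V" "?A = A" by simp_all
  define phi where "phi x = (if x = r then 0 else if x = a then 1 else if x = b then 2 else (3::nat))" for x
  have p: "phi r = 0" "phi a = 1" "phi b = 2" "phi c = 3"
    unfolding phi_def using d by auto
  have "bij_betw phi ?V W3_V"
    unfolding bij_betw_def inj_on_def W3_V_def using p by auto
  moreover have "\<forall>x\<in>?V. \<forall>y\<in>?V. (x, y) \<in> ?A \<longleftrightarrow> (phi x, phi y) \<in> W3_A"
    unfolding W3_A_def using p d d[symmetric] by simp
  ultimately show ?thesis unfolding isomorphic_def eq by blast
qed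

definition fn4 :: "nat \<Rightarrow> nat \<Rightarrow> nat \<Rightarrow> nat \<Rightarrow> nat \<Rightarrow> nat" where
  "fn4 w0 w1 w2 w3 p = (if p = 0 then w0 else if p = 1 then w1 else if p = 2 then w2 else w3)"

definition goodkh :: "nat \<Rightarrow> nat \<Rightarrow> (nat \<Rightarrow> nat) \<Rightarrow> (nat \<Rightarrow> nat) \<Rightarrow> bool" where
  "goodkh i j k h \<longleftrightarrow> (\<forall>p\<in>W3_V. k p \<in> {1,2}) \<and>
     (\<forall>e\<in>W3_A. e \<noteq> (i,j) \<and> k (fst e) = k (snd e) \<longrightarrow> h (fst e) < h (snd e))"

lemma W3_fin:
  assumes "(i,j) \<in> W3_A"
  shows "\<exists>k h. goodkh i j k h"
proof -
  have "(i,j) \<in> {(1,2),(2,3),(3,1),(0,1),(1,0),(0,2),(2,0),(0,3),(3,0)}"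
    using assms unfolding W3_A_def by simp
  moreover have "goodkh 1 2 (fn4 1 2 2 2) (fn4 0 2 0 1)"
    by (simp add: goodkh_def fn4_def W3_A_def W3_V_def)
  moreover have "goodkh 2 3 (fn4 1 2 2 2) (fn4 0 1 2 0)"
    by (simp add: goodkh_def fn4_def W3_A_def W3_V_def)
  moreover have "goodkh 3 1 (fn4 1 2 2 2) (fn4 0 0 1 2)"
    by (simp add: goodkh_def fn4_def W3_A_def W3_V_def)
  moreover have "goodkh 0 1 (fn4 1 1 2 2) (fn4 1 0 0 1)"
    by (simp add: goodkh_def fn4_def W3_A_def W3_V_def)
  moreover have "goodkh 0 2 (fn4 1 2 1 2) (fn4 1 1 0 0)"
    by (simp add: goodkh_def fn4_def W3_A_def W3_V_def)
  moreover have "goodkh 0 3 (fn4 1 2 2 1) (fn4 1 0 1 0)"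
    by (simp add: goodkh_def fn4_def W3_A_def W3_V_def)
  moreover have "goodkh 1 0 (fn4 1 1 2 2) (fn4 0 1 0 1)"
    by (simp add: goodkh_def fn4_def W3_A_def W3_V_def)
  moreover have "goodkh 2 0 (fn4 1 2 1 2) (fn4 0 1 1 0)"
    by (simp add: goodkh_def fn4_def W3_A_def W3_V_def)
  moreover have "goodkh 3 0 (fn4 1 2 2 1) (fn4 0 0 1 1)"
    by (simp add: goodkh_def fn4_def W3_A_def W3_V_def)
  ultimately show ?thesis by blast
qed

lemma iso_crit:
  assumes AV: "A \<subseteq> V \<times> V" and iso: "isomorphic V A W3_V W3_A"
  shows "three_dicritical V A"
proof -
  obtain f where bij: "bij_betw f V W3_V"
    and arc: "\<forall>x\<in>V. \<forall>y\<in>V. (x,y) \<in> A \<longleftrightarrow> (f x, f y) \<in> W3_A"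
    using iso unfolding isomorphic_def by blast
  have inj: "inj_on f V" and img: "f ` V = W3_V" using bij unfolding bij_betw_def by auto
  have A_iff: "(x,y) \<in> A \<longleftrightarrow> (f x, f y) \<in> W3_A" if "x \<in> V" "y \<in> V" for x y
    using arc that by blast
  have ex: "\<exists>v\<in>V. f v = i" if "i \<in> W3_V" for i using img that by force
  obtain r where r: "r\<in>V" "f r = 0" using ex[of 0] by (auto simp: W3_V_def)
  obtain a where a: "a\<in>V" "f a = 1" using ex[of 1] by (auto simp: W3_V_def)
  obtain b where b: "b\<in>V" "f b = 2" using ex[of 2] by (auto simp: W3_V_def)
  obtain c where c: "c\<in>V" "f c = 3" using ex[of 3] by (auto simp: W3_V_def)
  have noncol: "\<not> two_dicolourable V A"
  proof (rule W3_noncol[OF r(1) a(1) b(1) c(1)])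
    show "(r,a)\<in>A" using A_iff[OF r(1) a(1)] r(2) a(2) by (simp add: W3_A_def)
    show "(a,r)\<in>A" using A_iff[OF a(1) r(1)] r(2) a(2) by (simp add: W3_A_def)
    show "(r,b)\<in>A" using A_iff[OF r(1) b(1)] r(2) b(2) by (simp add: W3_A_def)
    show "(b,r)\<in>A" using A_iff[OF b(1) r(1)] r(2) b(2) by (simp add: W3_A_def)
    show "(r,c)\<in>A" using A_iff[OF r(1) c(1)] r(2) c(2) by (simp add: W3_A_def)
    show "(c,r)\<in>A" using A_iff[OF c(1) r(1)] r(2) c(2) by (simp add: W3_A_def)
    show "(a,b)\<in>A" using A_iff[OF a(1) b(1)] a(2) b(2) by (simp add: W3_A_def)
    show "(b,c)\<in>A" using A_iff[OF b(1) c(1)] b(2) c(2) by (simp add: W3_A_def)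
    show "(c,a)\<in>A" using A_iff[OF c(1) a(1)] c(2) a(2) by (simp add: W3_A_def)
  qed
  have "two_dicolourable V' A'" if sub: "subdigraph V' A' V A" and ne: "(V',A') \<noteq> (V,A)" for V' A'
  proof -
    have V'V: "V' \<subseteq> V" "A' \<subseteq> A" "A' \<subseteq> V' \<times> V'" using sub unfolding subdigraph_def by auto
    have "\<exists>e\<in>A. e \<notin> A'"
    proof (cases "A' = A")
      case False then show ?thesis using V'V by blast
    next
      case True
      then have "V' \<noteq> V" using ne by auto
      then obtain v where v: "v\<in>V" "v\<notin>V'" using V'V by blast
      have "f v \<in> W3_V" using img v by blast
      then have "\<exists>w\<in>V. (v,w)\<in>A"
      proof -
        assume fv: "f v \<in> W3_V"
        consider "f v = 0" | "f v \<in> {1,2,3}" using fv by (auto simp: W3_V_def)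
        then show ?thesis
        proof cases
          case 1 then have "(v,a)\<in>A" using A_iff[OF v(1) a(1)] a(2) by (simp add: W3_A_def)
          then show ?thesis using a(1) by blast
        next
          case 2 then have "(v,r)\<in>A" using A_iff[OF v(1) r(1)] r(2) by (auto simp: W3_A_def)
          then show ?thesis using r(1) by blast
        qed
      qed
      then obtain w where "(v,w)\<in>A" by blast
      moreover have "(v,w) \<notin> A'" using V'V(3) v(2) by blast
      ultimately show ?thesis by blast
    qed
    then obtain u0 w0 where e: "(u0,w0)\<in>A" "(u0,w0)\<notin>A'" by auto
    have u0w0: "u0\<in>V" "w0\<in>V" using e(1) AV by auto
    have "(f u0, f w0) \<in> W3_A" using A_iff[OF u0w0] e(1) by blast
    then obtain k h where kh: "goodkh (f u0) (f w0) k h" using W3_fin by blast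
    have kv: "\<forall>p\<in>W3_V. k p \<in> {1,2}"
      and kh2: "\<forall>e\<in>W3_A. e \<noteq> (f u0, f w0) \<and> k (fst e) = k (snd e) \<longrightarrow> h (fst e) < h (snd e)"
      using kh unfolding goodkh_def by blast+
    have "two_dicolouring V' A' (k \<circ> f)"
      unfolding two_dicolouring_def
    proof (intro conjI ballI)
      fix v assume "v\<in>V'" then have "f v \<in> W3_V" using V'V(1) img by blast
      then show "(k\<circ>f) v \<in> {1,2}" using kv by simp
    next
      fix i::nat assume "i\<in>{1,2}"
      have lt: "(h\<circ>f) u < (h\<circ>f) v" if "(u,v) \<in> induced_arcs A' {v\<in>V'. (k\<circ>f) v = i}" for u v
      proof -
        from that have uv: "(u,v)\<in>A'" "u\<in>V'" "v\<in>V'" "k (f u) = i" "k (f v) = i"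
          by (auto simp: induced_arcs_def)
        have uvV: "u\<in>V" "v\<in>V" using uv(2,3) V'V(1) by auto
        have "(u,v) \<noteq> (u0,w0)" using uv(1) e(2) by blast
        then have "(f u, f v) \<noteq> (f u0, f w0)" using inj uvV u0w0 unfolding inj_on_def by blast
        moreover have "(f u, f v) \<in> W3_A" using A_iff[OF uvV] V'V(2) uv(1) by blast
        ultimately show ?thesis using kh2 uv(4,5) by fastforce
      qed
      show "acyclic (induced_arcs A' {v\<in>V'. (k\<circ>f) v = i})"
        by (rule acyc_rank[where h="h \<circ> f"]) (use lt in blast)
    qed
    then show ?thesis unfolding two_dicolourable_def by blast
  qed
  then show ?thesis using noncol unfolding three_dicritical_def by blast
qed

lemma trans_any:
  assumes AV: "A \<subseteq> V \<times> V" and crit: "three_dicritical V A"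
    and V: "r\<in>V" "x\<in>V" "y\<in>V" "z\<in>V"
    and d: "r\<noteq>x" "r\<noteq>y" "r\<noteq>z" "x\<noteq>y" "y\<noteq>z" "x\<noteq>z"
    and g: "(r,x)\<in>A \<and> (x,r)\<in>A" "(r,y)\<in>A \<and> (y,r)\<in>A" "(r,z)\<in>A \<and> (z,r)\<in>A"
  shows "\<not> ((x,y)\<in>A \<and> (y,z)\<in>A \<and> (x,z)\<in>A)"
  using trans_not_crit[OF AV V d] g crit by blast

theorem lemma20:
  fixes V :: "'a set" and A :: "('a \<times> 'a) set"
  assumes "digraph V A"
    and "semicomplete V A"
    and "contains_subdigraph V A S4_V S4_A"
  shows "three_dicritical V A \<longleftrightarrow> isomorphic V A W3_V W3_A"
proof -
  have AV: "A \<subseteq> V \<times> V" using assms(1) unfolding digraph_def by blast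
  obtain f where inj: "inj_on f S4_V" and im: "f ` S4_V \<subseteq> V"
    and arcs: "\<forall>(x,y)\<in>S4_A. (f x, f y) \<in> A"
    using assms(3) unfolding contains_subdigraph_def by blast
  define r where "r = f 0"
  define a where "a = f 1"
  define b where "b = f 2"
  define c where "c = f 3"
  have V: "r\<in>V" "a\<in>V" "b\<in>V" "c\<in>V"
    using im unfolding S4_V_def r_def a_def b_def c_def by auto
  have inj': "x = y" if "x\<in>S4_V" "y\<in>S4_V" "f x = f y" for x y
    using inj that unfolding inj_on_def by blast
  have d: "r\<noteq>a" "r\<noteq>b" "r\<noteq>c" "a\<noteq>b" "b\<noteq>c" "a\<noteq>c"
    unfolding r_def a_def b_def c_def
    using inj'[of 0 1] inj'[of 0 2] inj'[of 0 3] inj'[of 1 2] inj'[of 2 3] inj'[of 1 3]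
    by (auto simp: S4_V_def)
  have g: "(r,a)\<in>A" "(a,r)\<in>A" "(r,b)\<in>A" "(b,r)\<in>A" "(r,c)\<in>A" "(c,r)\<in>A"
    using arcs unfolding S4_A_def r_def a_def b_def c_def by simp_all
  have sc: "(u,v)\<in>A \<or> (v,u)\<in>A" if "u\<in>V" "v\<in>V" "u\<noteq>v" for u v
    using assms(2) that unfolding semicomplete_def by blast
  have ab: "(a,b)\<in>A \<or> (b,a)\<in>A" using sc V d by blast
  have bc: "(b,c)\<in>A \<or> (c,b)\<in>A" using sc V d by blast
  have ac: "(a,c)\<in>A \<or> (c,a)\<in>A" using sc V d by blast
  show ?thesis
  proof
    assume crit: "three_dicritical V A"
    show "isomorphic V A W3_V W3_A"
    proof (cases "(a,b)\<in>A \<and> (b,c)\<in>A \<and> (c,a)\<in>A")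
      case True
      then show ?thesis using crit_cyc[OF crit V d g] by blast
    next
      case F1: False
      show ?thesis
      proof (cases "(a,c)\<in>A \<and> (c,b)\<in>A \<and> (b,a)\<in>A")
        case True
        have d2: "r\<noteq>a" "r\<noteq>c" "r\<noteq>b" "a\<noteq>c" "c\<noteq>b" "a\<noteq>b" using d by auto
        show ?thesis
          using crit_cyc[OF crit V(1,2,4,3) d2 g(1,2,5,6,3,4)] True by blast
      next
        case F2: False
        have gg: "(r,a)\<in>A \<and> (a,r)\<in>A" "(r,b)\<in>A \<and> (b,r)\<in>A" "(r,c)\<in>A \<and> (c,r)\<in>A"
          using g by blast+
        note T = trans_any[OF AV crit]
        have t1: "\<not> ((a,b)\<in>A \<and> (b,c)\<in>A \<and> (a,c)\<in>A)"
          by (rule T) (use V d gg in auto)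
        have t2: "\<not> ((a,c)\<in>A \<and> (c,b)\<in>A \<and> (a,b)\<in>A)"
          by (rule T) (use V d gg in auto)
        have t3: "\<not> ((b,a)\<in>A \<and> (a,c)\<in>A \<and> (b,c)\<in>A)"
          by (rule T) (use V d gg in auto)
        have t4: "\<not> ((b,c)\<in>A \<and> (c,a)\<in>A \<and> (b,a)\<in>A)"
          by (rule T) (use V d gg in auto)
        have t5: "\<not> ((c,a)\<in>A \<and> (a,b)\<in>A \<and> (c,b)\<in>A)"
          by (rule T) (use V d gg in auto)
        have t6: "\<not> ((c,b)\<in>A \<and> (b,a)\<in>A \<and> (c,a)\<in>A)"
          by (rule T) (use V d gg in auto)
        show ?thesis using ab bc ac F1 F2 t1 t2 t3 t4 t5 t6 by blast
      qed
    qed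
  next
    assume "isomorphic V A W3_V W3_A"
    then show "three_dicritical V A" using iso_crit[OF AV] by blast
  qed
qed

end
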